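(* Let $b_n$ be the number of big-walks of length $2n$. Then $b_{m+n}\ge b_m b_n$ for all $m,n\ge 0$, and $b_n\le 16^n$; consequently $\lim_{n\to\infty}\sqrt[n]{b_n}$ exists and is finite. Moreover, if $\hat b_n$ denotes the number of left-walks of length $2n$, then $2\hat b_n\ge b_n$ and $\lim_{n\to\infty}\sqrt[n]{\hat b_n}=\lim_{n\to\infty}\sqrt[n]{b_n}$.
   Context: All walks are finite sequences of unit steps from $\{N,E,S,W\}=\{(0,1),(1,0),(0,-1),(-1,0)\}$ on $\mathbb{Z}^2$, starting at $(0,0)$. A walk is \emph{eager} if it contains no two consecutive steps $E$ then $S$, and no two consecutive steps $N$ then $W$. A \emph{QP-subloop} of a walk is a contiguous subsequence of steps starting and ending at the same point $(p,q)$ and visiting only points $(x,y)$ with $x\ge p$, $y\ge q$. A walk is \emph{standard} if every QP-subloop (of positive length) begins with an $N$ step. A \emph{big-walk} is a standard eager walk staying in the half-plane $\{x+y\ge 0\}$ and ending at some point $(x,-x)$. A \emph{left-walk} is a big-walk ending at a point $(x,-x)$ with $x\le 0$. *)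

theory Defs
  imports Complex_Main
begin

datatype step = N | E | S | W

fun step_vec :: "step \<Rightarrow> int \<times> int" where
  "step_vec N = (0, 1)"
| "step_vec E = (1, 0)"
| "step_vec S = (0, -1)"
| "step_vec W = (-1, 0)"

definition pos :: "step list \<Rightarrow> nat \<Rightarrow> int \<times> int" where
  "pos w k = ((\<Sum>s\<leftarrow>take k w. fst (step_vec s)), (\<Sum>s\<leftarrow>take k w. snd (step_vec s)))"

definition eager :: "step list \<Rightarrow> bool" where
  "eager w \<longleftrightarrow> (\<forall>i. Suc i < length w \<longrightarrow>
      \<not> (w ! i = E \<and> w ! Suc i = S) \<and> \<not> (w ! i = N \<and> w ! Suc i = W))"

definition qp_subloop :: "step list \<Rightarrow> nat \<Rightarrow> nat \<Rightarrow> bool" where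
  "qp_subloop w i j \<longleftrightarrow> i \<le> j \<and> j \<le> length w \<and> pos w i = pos w j \<and>
     (\<forall>k. i \<le> k \<and> k \<le> j \<longrightarrow>
        fst (pos w i) \<le> fst (pos w k) \<and> snd (pos w i) \<le> snd (pos w k))"

definition standard :: "step list \<Rightarrow> bool" where
  "standard w \<longleftrightarrow> (\<forall>i j. i < j \<and> qp_subloop w i j \<longrightarrow> w ! i = N)"

definition big_walk :: "step list \<Rightarrow> bool" where
  "big_walk w \<longleftrightarrow> standard w \<and> eager w \<and>
     (\<forall>k \<le> length w. fst (pos w k) + snd (pos w k) \<ge> 0) \<and>
     fst (pos w (length w)) + snd (pos w (length w)) = 0"

definition left_walk :: "step list \<Rightarrow> bool" where
  "left_walk w \<longleftrightarrow> big_walk w \<and> fst (pos w (length w)) \<le> 0"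

definition num_big :: "nat \<Rightarrow> nat" where
  "num_big n = card {w. length w = 2 * n \<and> big_walk w}"

definition num_left :: "nat \<Rightarrow> nat" where
  "num_left n = card {w. length w = 2 * n \<and> left_walk w}"

end

theory Submission
  imports Defs
begin


abbreviation px where "px w k \<equiv> fst (pos w k)"
abbreviation py where "py w k \<equiv> snd (pos w k)"

lemma pos_0[simp]: "pos w 0 = (0,0)" by (simp add: pos_def)

lemma pos_Suc: "k < length w \<Longrightarrow>
  pos w (Suc k) = (px w k + fst (step_vec (w!k)), py w k + snd (step_vec (w!k)))"
  by (simp add: pos_def take_Suc_conv_app_nth)

lemma pos_append_le: "k \<le> length u \<Longrightarrow> pos (u @ v) k = pos u k"
  by (simp add: pos_def)

lemma pos_append_shift: "pos (u @ v) (length u + k) = (px u (length u) + px v k, py u (length u) + py v k)"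
  by (simp add: pos_def)

lemma step_UNIV: "(UNIV :: step set) = {N,E,S,W}"
  using step.exhaust by auto

lemma finite_step[simp]: "finite (UNIV :: step set)" by (simp add: step_UNIV)
lemma card_step: "card (UNIV :: step set) = 4" by (simp add: step_UNIV)

definition loop :: "step list \<Rightarrow> nat \<Rightarrow> nat \<Rightarrow> bool" where
  "loop w i j \<longleftrightarrow> i < j \<and> qp_subloop w i j"

lemma loop_iff: "loop w i j \<longleftrightarrow> i < j \<and> j \<le> length w \<and> px w i = px w j \<and> py w i = py w j \<and>
   (\<forall>k. i \<le> k \<and> k \<le> j \<longrightarrow> px w i \<le> px w k \<and> py w i \<le> py w k)"
  unfolding loop_def qp_subloop_def by (auto simp: prod_eq_iff)

lemma standard_iff: "standard w \<longleftrightarrow> (\<forall>i j. loop w i j \<longrightarrow> w ! i = N)"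
  unfolding standard_def loop_def by auto

lemma loop_last: assumes "loop w i j" shows "w ! (j - 1) = S \<or> w ! (j - 1) = W"
proof -
  from assms have ij: "i < j" "j \<le> length w" by (auto simp: loop_iff)
  have j: "j = Suc (j - 1)" using ij by simp
  have "px w i \<le> px w (j-1)" "py w i \<le> py w (j-1)" "px w i = px w j" "py w i = py w j"
    using assms ij by (auto simp: loop_iff)
  moreover have "pos w j = (px w (j-1) + fst (step_vec (w!(j-1))), py w (j-1) + snd (step_vec (w!(j-1))))"
    using pos_Suc[of "j-1" w] j ij by simp
  ultimately show ?thesis by (cases "w ! (j-1)") auto
qed



lemma loop_union1:
  assumes l1: "loop w i j" and l2: "loop w a b" and "i \<le> a" "a \<le> j"
  shows "loop w i (max j b)"
proof (cases "b \<le> j")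
  case True thus ?thesis using l1 by (simp add: max_def)
next
  case False
  have "px w i \<le> px w a" "py w i \<le> py w a" using l1 assms(3,4) by (auto simp: loop_iff)
  moreover have "px w a \<le> px w j" "py w a \<le> py w j" using l2 assms(3,4) False by (auto simp: loop_iff)
  moreover have "px w i = px w j" "py w i = py w j" using l1 by (auto simp: loop_iff)
  ultimately have e: "px w a = px w i" "py w a = py w i" by auto
  have all: "\<forall>k. i \<le> k \<and> k \<le> max j b \<longrightarrow> px w i \<le> px w k \<and> py w i \<le> py w k"
  proof (intro allI impI)
    fix k assume k: "i \<le> k \<and> k \<le> max j b"
    show "px w i \<le> px w k \<and> py w i \<le> py w k"
    proof (cases "k \<le> j")
      case True thus ?thesis using l1 k by (auto simp: loop_iff)
    next
      case False2: False
      then have "a \<le> k" "k \<le> b" using k assms False by auto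
      thus ?thesis using l2 e by (auto simp: loop_iff)
    qed
  qed
  have "i < max j b" using l1 False by (auto simp: loop_iff)
  moreover have "max j b \<le> length w" using l2 False by (auto simp: loop_iff)
  moreover have "px w i = px w (max j b)" "py w i = py w (max j b)" using l2 e False by (auto simp: loop_iff max_def)
  ultimately show ?thesis unfolding loop_iff using all by blast
qed

lemma loop_union:
  assumes "loop w i j" "loop w a b" "i \<le> c" "c \<le> j" "a \<le> c" "c \<le> b"
  shows "loop w (min i a) (max j b)"
proof (cases "i \<le> a")
  case True thus ?thesis using loop_union1[OF assms(1,2)] assms by (simp add: min_def)
next
  case False thus ?thesis using loop_union1[OF assms(2,1)] assms by (simp add: min_def max.commute)
qed

definition maxloop :: "step list \<Rightarrow> nat \<Rightarrow> nat \<Rightarrow> bool" where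
  "maxloop w i j \<longleftrightarrow> loop w i j \<and> (\<forall>a b. loop w a b \<and> a \<le> i \<and> j \<le> b \<longrightarrow> a = i \<and> b = j)"

definition inC :: "step list \<Rightarrow> nat \<Rightarrow> bool" where
  "inC w k \<longleftrightarrow> (\<exists>i j. loop w i j \<and> i \<le> k \<and> k < j)"

definition free :: "step list \<Rightarrow> nat \<Rightarrow> bool" where
  "free w k \<longleftrightarrow> \<not> (\<exists>i j. loop w i j \<and> i < k \<and> k < j)"

lemma maxloop_exists: "loop w i j \<Longrightarrow> \<exists>a b. maxloop w a b \<and> a \<le> i \<and> j \<le> b"
proof (induction "length w - (j - i)" arbitrary: i j rule: less_induct)
  case less
  show ?case
  proof (cases "maxloop w i j")
    case True thus ?thesis by auto
  next
    case False
    then obtain a b where ab: "loop w a b" "a \<le> i" "j \<le> b" "\<not> (a = i \<and> b = j)"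
      using less.prems by (auto simp: maxloop_def)
    have "b \<le> length w" "i < j" using ab less.prems by (auto simp: loop_iff)
    then have "length w - (b - a) < length w - (j - i)" using ab by auto
    from less.hyps[OF this ab(1)] obtain a' b' where "maxloop w a' b'" "a' \<le> a" "b \<le> b'" by auto
    thus ?thesis using ab by force
  qed
qed

lemma maxloop_loop: "maxloop w i j \<Longrightarrow> loop w i j" by (simp add: maxloop_def)

lemma maxloop_unique:
  assumes "maxloop w i j" "maxloop w a b" "i \<le> c" "c \<le> j" "a \<le> c" "c \<le> b"
  shows "a = i \<and> b = j"
proof -
  have u: "loop w (min i a) (max j b)" using loop_union[OF maxloop_loop[OF assms(1)] maxloop_loop[OF assms(2)]] assms by auto
  have le: "min i a \<le> i" "j \<le> max j b" "min i a \<le> a" "b \<le> max j b" by auto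
  have "min i a = i \<and> max j b = j" using assms(1) u le unfolding maxloop_def by blast
  moreover have "min i a = a \<and> max j b = b" using assms(2) u le unfolding maxloop_def by blast
  ultimately show ?thesis by auto
qed

lemma maxloop_free:
  assumes m: "maxloop w i j" shows "free w i" "free w j"
proof -
  show "free w i" unfolding free_def
  proof
    assume "\<exists>a b. loop w a b \<and> a < i \<and> i < b"
    then obtain a b where ab: "loop w a b" "a < i" "i < b" by auto
    have ij: "i < j" using maxloop_loop[OF m] by (simp add: loop_def)
    have "loop w (min i a) (max j b)" using loop_union[OF maxloop_loop[OF m] ab(1), of i] ab ij
      by auto
    moreover have "min i a \<le> i" "j \<le> max j b" by auto
    ultimately have "min i a = i" using m unfolding maxloop_def by blast
    with ab show False by simp
  qed
  show "free w j" unfolding free_def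
  proof
    assume "\<exists>a b. loop w a b \<and> a < j \<and> j < b"
    then obtain a b where ab: "loop w a b" "a < j" "j < b" by auto
    have ij: "i < j" using maxloop_loop[OF m] by (simp add: loop_def)
    have "loop w (min i a) (max j b)" using loop_union[OF maxloop_loop[OF m] ab(1), of j] ab ij
      by auto
    moreover have "min i a \<le> i" "j \<le> max j b" by auto
    ultimately have "max j b = j" using m unfolding maxloop_def by blast
    with ab show False by simp
  qed
qed

lemma nonfree_maxloop: "\<not> free w k \<Longrightarrow> \<exists>i j. maxloop w i j \<and> i < k \<and> k < j"
  unfolding free_def using maxloop_exists by fastforce

lemma inC_maxloop: "inC w k \<Longrightarrow> \<exists>i j. maxloop w i j \<and> i \<le> k \<and> k < j"
  unfolding inC_def using maxloop_exists by fastforce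

lemma notinC_free: "\<not> inC w k \<Longrightarrow> free w k \<and> free w (Suc k)"
proof -
  assume h: "\<not> inC w k"
  have "free w k" unfolding free_def
  proof
    assume "\<exists>i j. loop w i j \<and> i < k \<and> k < j"
    then obtain i j where "loop w i j" "i \<le> k" "k < j" by force
    with h show False unfolding inC_def by blast
  qed
  moreover have "free w (Suc k)" unfolding free_def
  proof
    assume "\<exists>i j. loop w i j \<and> i < Suc k \<and> Suc k < j"
    then obtain i j where "loop w i j" "i \<le> k" "k < j" by force
    with h show False unfolding inC_def by blast
  qed
  ultimately show ?thesis ..
qed



fun swp :: "step \<Rightarrow> step" where
  "swp N = E" | "swp E = N" | "swp S = W" | "swp W = S"

lemma swp_swp[simp]: "swp (swp s) = s" by (cases s) auto
lemma step_vec_swp: "step_vec (swp s) = (snd (step_vec s), fst (step_vec s))" by (cases s) auto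

definition psi :: "step list \<Rightarrow> step list" where
  "psi w = map (\<lambda>k. if inC w k then w ! k else swp (w ! k)) [0..<length w]"

lemma psi_length[simp]: "length (psi w) = length w" by (simp add: psi_def)
lemma psi_nth: "k < length w \<Longrightarrow> psi w ! k = (if inC w k then w ! k else swp (w ! k))"
  by (simp add: psi_def)

lemma psi_pos:
  assumes "k \<le> length w"
  shows "(free w k \<longrightarrow> pos (psi w) k = (py w k, px w k)) \<and>
    (\<forall>i j. maxloop w i j \<and> i \<le> k \<and> k \<le> j \<longrightarrow>
       pos (psi w) k = (py w i + px w k - px w i, px w i + py w k - py w i))"
  using assms
proof (induction k)
  case 0
  have "\<forall>i j. maxloop w i j \<and> i \<le> 0 \<and> 0 \<le> j \<longrightarrow> i = 0" by auto
  then show ?case by auto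
next
  case (Suc k)
  let ?v = "psi w"
  have kl: "k < length w" using Suc.prems by simp
  have IH: "(free w k \<longrightarrow> pos ?v k = (py w k, px w k)) \<and>
    (\<forall>i j. maxloop w i j \<and> i \<le> k \<and> k \<le> j \<longrightarrow>
       pos ?v k = (py w i + px w k - px w i, px w i + py w k - py w i))"
    using Suc kl by simp
  have pv: "pos ?v (Suc k) = (fst (pos ?v k) + fst (step_vec (?v!k)), snd (pos ?v k) + snd (step_vec (?v!k)))"
    using pos_Suc[of k ?v] kl by simp
  have pw: "pos w (Suc k) = (px w k + fst (step_vec (w!k)), py w k + snd (step_vec (w!k)))"
    using pos_Suc[of k w] kl by simp
  show ?case
  proof (cases "inC w k")
    case False
    then have fr: "free w k" "free w (Suc k)" using notinC_free by auto
    have vk: "?v ! k = swp (w ! k)" using False kl by (simp add: psi_nth)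
    have F: "pos ?v (Suc k) = (py w (Suc k), px w (Suc k))"
      using pv pw IH fr vk by (simp add: step_vec_swp)
    have M: "pos ?v (Suc k) = (py w i + px w (Suc k) - px w i, px w i + py w (Suc k) - py w i)"
      if m: "maxloop w i j" "i \<le> Suc k" "Suc k \<le> j" for i j
    proof -
      have ij: "i < j" using maxloop_loop[OF m(1)] by (simp add: loop_def)
      have "i = Suc k"
      proof (rule ccontr)
        assume "i \<noteq> Suc k"
        then have "i \<le> k" using m by simp
        moreover have "k < j" using m by simp
        ultimately have "inC w k" using maxloop_loop[OF m(1)] unfolding inC_def by blast
        with False show False by simp
      qed
      thus ?thesis using F by simp
    qed
    show ?thesis using F M by blast
  next
    case True
    then obtain i j where m: "maxloop w i j" "i \<le> k" "k < j" using inC_maxloop by blast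
    have vk: "?v ! k = w ! k" using True kl by (simp add: psi_nth)
    have Mk: "pos ?v (Suc k) = (py w i + px w (Suc k) - px w i, px w i + py w (Suc k) - py w i)"
    proof -
      have "pos ?v k = (py w i + px w k - px w i, px w i + py w k - py w i)"
        using conjunct2[OF IH] m by (meson less_imp_le)
      thus ?thesis using pv pw vk by simp
    qed
    have M: "pos ?v (Suc k) = (py w a + px w (Suc k) - px w a, px w a + py w (Suc k) - py w a)"
      if m2: "maxloop w a b" "a \<le> Suc k" "Suc k \<le> b" for a b
    proof -
      have "a = i \<and> b = j" using maxloop_unique[OF m(1) m2(1), of "Suc k"] m m2 by simp
      thus ?thesis using Mk by simp
    qed
    have F: "pos ?v (Suc k) = (py w (Suc k), px w (Suc k))" if fr: "free w (Suc k)"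
    proof -
      have "Suc k = j"
      proof (rule ccontr)
        assume "Suc k \<noteq> j"
        then have "i < Suc k" "Suc k < j" using m by auto
        with fr maxloop_loop[OF m(1)] show False unfolding free_def by blast
      qed
      then have "px w (Suc k) = px w i" "py w (Suc k) = py w i"
        using maxloop_loop[OF m(1)] by (auto simp: loop_iff)
      thus ?thesis using Mk by simp
    qed
    show ?thesis using F M by blast
  qed
qed

lemma psi_pos_free: "k \<le> length w \<Longrightarrow> free w k \<Longrightarrow> pos (psi w) k = (py w k, px w k)"
  using psi_pos by blast

lemma psi_pos_max: "k \<le> length w \<Longrightarrow> maxloop w i j \<Longrightarrow> i \<le> k \<Longrightarrow> k \<le> j \<Longrightarrow>
   pos (psi w) k = (py w i + px w k - px w i, px w i + py w k - py w i)"
  using psi_pos by blast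

lemma maxloop_le_length: "maxloop w i j \<Longrightarrow> j \<le> length w"
  by (simp add: maxloop_def loop_iff)

lemma psi_sum: assumes "k \<le> length w"
  shows "px (psi w) k + py (psi w) k = px w k + py w k"
proof (cases "free w k")
  case True thus ?thesis using psi_pos_free[OF assms] by simp
next
  case False
  then obtain i j where "maxloop w i j" "i < k" "k < j" using nonfree_maxloop by blast
  thus ?thesis using psi_pos_max[OF assms] by fastforce
qed

lemma free_length: "free w (length w)"
  unfolding free_def by (auto simp: loop_iff)

lemma psi_end: "pos (psi w) (length w) = (py w (length w), px w (length w))"
  using psi_pos_free[OF order.refl free_length] .



lemma psi_trans:
  assumes m: "maxloop w i j" and "i \<le> k" "k \<le> j"
  shows "px (psi w) k = py w i + px w k - px w i \<and> py (psi w) k = px w i + py w k - py w i"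
  using psi_pos_max[OF _ m assms(2,3)] maxloop_le_length[OF m] assms by auto

lemma loop_w_v: assumes l: "loop w a b" shows "loop (psi w) a b"
proof -
  obtain i j where m: "maxloop w i j" "i \<le> a" "b \<le> j" using maxloop_exists[OF l] by blast
  have ab: "a < b" "b \<le> length w" using l by (auto simp: loop_iff)
  have T: "px (psi w) k = py w i + px w k - px w i \<and> py (psi w) k = px w i + py w k - py w i"
    if "a \<le> k" "k \<le> b" for k using psi_trans[OF m(1)] that m ab by auto
  show ?thesis unfolding loop_iff
  proof (intro conjI allI impI)
    show "a < b" "b \<le> length (psi w)" using ab by auto
    show "px (psi w) a = px (psi w) b" "py (psi w) a = py (psi w) b"
      using T[of a] T[of b] ab l by (auto simp: loop_iff)
  next
    fix k assume k: "a \<le> k \<and> k \<le> b"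
    show "px (psi w) a \<le> px (psi w) k" "py (psi w) a \<le> py (psi w) k"
      using T[of a] T[of k] ab k l by (auto simp: loop_iff)
  qed
qed

lemma loop_v_A:
  assumes l: "loop (psi w) a b" and fa: "free w a" and fb: "free w b"
  shows "loop w a b"
proof -
  have ab: "a < b" "b \<le> length w" using l by (auto simp: loop_iff)
  have Fa: "pos (psi w) a = (py w a, px w a)" using psi_pos_free[OF _ fa] ab by simp
  have Fb: "pos (psi w) b = (py w b, px w b)" using psi_pos_free[OF _ fb] ab by simp
  have eq: "px w a = px w b" "py w a = py w b" using l Fa Fb by (auto simp: loop_iff)
  have G: "px w a \<le> px w k \<and> py w a \<le> py w k" if k: "a \<le> k" "k \<le> b" for k
  proof (cases "free w k")
    case True
    have "pos (psi w) k = (py w k, px w k)" using psi_pos_free[OF _ True] k ab by simp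
    thus ?thesis using l Fa k by (auto simp: loop_iff)
  next
    case False
    then obtain i j where m: "maxloop w i j" "i < k" "k < j" using nonfree_maxloop by blast
    have "a \<le> i"
    proof (rule ccontr)
      assume "\<not> a \<le> i" then have "i < a" "a < j" using k m by auto
      with fa maxloop_loop[OF m(1)] show False unfolding free_def by blast
    qed
    moreover have "j \<le> b"
    proof (rule ccontr)
      assume "\<not> j \<le> b" then have "i < b" "b < j" using k m ab by auto
      with fb maxloop_loop[OF m(1)] show False unfolding free_def by blast
    qed
    moreover have "pos (psi w) i = (py w i, px w i)"
      using psi_pos_free[OF _ maxloop_free(1)[OF m(1)]] m ab \<open>j \<le> b\<close> by simp
    ultimately have "px w a \<le> px w i \<and> py w a \<le> py w i" using l Fa ab \<open>j \<le> b\<close> m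
      by (auto simp: loop_iff)
    moreover have "px w i \<le> px w k \<and> py w i \<le> py w k" using maxloop_loop[OF m(1)] m
      by (auto simp: loop_iff)
    ultimately show ?thesis by auto
  qed
  show ?thesis unfolding loop_iff using ab eq G by auto
qed

lemma loop_v_C:
  assumes l: "loop (psi w) a b" and fa: "free w a"
  shows "loop w a b"
proof (cases "free w b")
  case True thus ?thesis using loop_v_A[OF l fa] by simp
next
  case False
  have ab: "a < b" "b \<le> length w" using l by (auto simp: loop_iff)
  obtain i j where m: "maxloop w i j" "i < b" "b < j" using nonfree_maxloop[OF False] by blast
  have ai: "a \<le> i"
  proof (rule ccontr)
    assume "\<not> a \<le> i" then have "i < a" "a < j" using ab m by auto
    with fa maxloop_loop[OF m(1)] show False unfolding free_def by blast
  qed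
  show ?thesis
  proof (cases "a = i")
    case True
    have jl: "j \<le> length w" using maxloop_le_length[OF m(1)] .
    have T: "px (psi w) k = py w i + px w k - px w i \<and> py (psi w) k = px w i + py w k - py w i"
      if "a \<le> k" "k \<le> b" for k using psi_trans[OF m(1)] that m True by auto
    show ?thesis unfolding loop_iff
    proof (intro conjI allI impI)
      show "a < b" "b \<le> length w" using ab by auto
      show "px w a = px w b" "py w a = py w b"
        using T[of a] T[of b] ab l by (auto simp: loop_iff)
    next
      fix k assume k: "a \<le> k \<and> k \<le> b"
      show "px w a \<le> px w k" "py w a \<le> py w k"
        using T[of a] T[of k] ab k l by (auto simp: loop_iff)
    qed
  next
    case False
    then have ai': "a < i" using ai by simp
    have Ti: "px (psi w) i = py w i \<and> py (psi w) i = px w i"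
      using psi_trans[OF m(1), of i] m by auto
    have Tb: "px (psi w) b = py w i + px w b - px w i \<and> py (psi w) b = px w i + py w b - py w i"
      using psi_trans[OF m(1), of b] m by auto
    have "px w i \<le> px w b \<and> py w i \<le> py w b" using maxloop_loop[OF m(1)] m by (auto simp: loop_iff)
    moreover have "px (psi w) b \<le> px (psi w) i \<and> py (psi w) b \<le> py (psi w) i"
      using l ai' m by (auto simp: loop_iff)
    ultimately have eqi: "px (psi w) i = px (psi w) a \<and> py (psi w) i = py (psi w) a"
      using Ti Tb l by (auto simp: loop_iff)
    have "loop (psi w) a i" unfolding loop_iff
      using l eqi ai' m ab by (auto simp: loop_iff)
    then have "loop w a i" using loop_v_A fa maxloop_free(1)[OF m(1)] by blast
    then have "loop w (min a i) (max i j)"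
      using loop_union[OF \<open>loop w a i\<close> maxloop_loop[OF m(1)], of i] ai' m by auto
    then have "loop w a j" using ai' m by (simp add: min_def max_def)
    with m(1) ai' have False unfolding maxloop_def by fastforce
    thus ?thesis ..
  qed
qed

lemma loop_v_w: assumes l: "loop (psi w) a b" shows "loop w a b"
proof (cases "free w a")
  case True thus ?thesis using loop_v_C[OF l] by simp
next
  case False
  have ab: "a < b" "b \<le> length w" using l by (auto simp: loop_iff)
  obtain i j where m: "maxloop w i j" "i < a" "a < j" using nonfree_maxloop[OF False] by blast
  have T: "px (psi w) k = py w i + px w k - px w i \<and> py (psi w) k = px w i + py w k - py w i"
    if "i \<le> k" "k \<le> j" for k using psi_trans[OF m(1)] that by auto
  have li: "loop w i j" using maxloop_loop[OF m(1)] .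
  show ?thesis
  proof (cases "b \<le> j")
    case True
    show ?thesis unfolding loop_iff
    proof (intro conjI allI impI)
      show "a < b" "b \<le> length w" using ab by auto
      show "px w a = px w b" "py w a = py w b"
        using T[of a] T[of b] ab l m True by (auto simp: loop_iff)
    next
      fix k assume k: "a \<le> k \<and> k \<le> b"
      show "px w a \<le> px w k" "py w a \<le> py w k"
        using T[of a] T[of k] ab k l m True by (auto simp: loop_iff)
    qed
  next
    case False
    have "px w i \<le> px w a \<and> py w i \<le> py w a" using li m by (auto simp: loop_iff)
    moreover have "px w i = px w j \<and> py w i = py w j" using li by (auto simp: loop_iff)
    moreover have "px (psi w) a \<le> px (psi w) j \<and> py (psi w) a \<le> py (psi w) j"
      using l m False by (auto simp: loop_iff)
    ultimately have e: "px w a = px w i \<and> py w a = py w i"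
      using T[of a] T[of j] m by auto
    have vi: "px (psi w) i = px (psi w) a \<and> py (psi w) i = py (psi w) a"
      using T[of a] T[of i] m e by auto
    have all: "\<forall>k. i \<le> k \<and> k \<le> b \<longrightarrow> px (psi w) i \<le> px (psi w) k \<and> py (psi w) i \<le> py (psi w) k"
    proof (intro allI impI)
      fix k assume k: "i \<le> k \<and> k \<le> b"
      show "px (psi w) i \<le> px (psi w) k \<and> py (psi w) i \<le> py (psi w) k"
      proof (cases "k \<le> a")
        case True
        have "px w i \<le> px w k \<and> py w i \<le> py w k" using li k True m by (auto simp: loop_iff)
        thus ?thesis using T[of i] T[of k] k True m by auto
      next
        case False
        thus ?thesis using l vi k by (auto simp: loop_iff)
      qed
    qed
    have "loop (psi w) i b" unfolding loop_iff
      using all ab m vi l by (auto simp: loop_iff)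
    then have "loop w i b" using loop_v_C maxloop_free(1)[OF m(1)] by blast
    with m(1) False show ?thesis unfolding maxloop_def by fastforce
  qed
qed

lemma loop_psi: "loop (psi w) a b \<longleftrightarrow> loop w a b"
  using loop_v_w loop_w_v by blast

lemma inC_psi: "inC (psi w) k \<longleftrightarrow> inC w k"
  unfolding inC_def loop_psi ..

lemma psi_psi: "psi (psi w) = w"
proof (rule nth_equalityI)
  show "length (psi (psi w)) = length w" by simp
  fix k assume "k < length (psi (psi w))"
  then have k: "k < length w" by simp
  show "psi (psi w) ! k = w ! k"
    using k by (simp add: psi_nth inC_psi)
qed



lemma eager_iff: "eager w \<longleftrightarrow> (\<forall>i. Suc i < length w \<longrightarrow>
      \<not> (w ! i = E \<and> w ! Suc i = S) \<and> \<not> (w ! i = N \<and> w ! Suc i = W))"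
  by (simp add: eager_def)

lemma psi_standard: assumes "standard w" shows "standard (psi w)"
  unfolding standard_iff
proof (intro allI impI)
  fix i j assume l: "loop (psi w) i j"
  then have lw: "loop w i j" by (simp add: loop_psi)
  then have "i < length w" "inC w i" by (auto simp: loop_iff inC_def)
  moreover have "w ! i = N" using assms lw unfolding standard_iff by blast
  ultimately show "psi w ! i = N" by (simp add: psi_nth)
qed

lemma psi_eager: assumes st: "standard w" and eg: "eager w" shows "eager (psi w)"
  unfolding eager_iff
proof (intro allI impI)
  fix k assume k: "Suc k < length (psi w)"
  then have k': "Suc k < length w" by simp
  have wk: "\<not> (w ! k = E \<and> w ! Suc k = S) \<and> \<not> (w ! k = N \<and> w ! Suc k = W)"
    using eg k' by (simp add: eager_iff)
  show "\<not> (psi w ! k = E \<and> psi w ! Suc k = S) \<and> \<not> (psi w ! k = N \<and> psi w ! Suc k = W)"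
  proof (cases "inC w k")
    case True note Ck = True
    show ?thesis
    proof (cases "inC w (Suc k)")
      case True thus ?thesis using Ck wk k' by (simp add: psi_nth)
    next
      case False
      obtain i j where m: "maxloop w i j" "i \<le> k" "k < j" using inC_maxloop[OF Ck] by blast
      have "j = Suc k"
      proof (rule ccontr)
        assume "j \<noteq> Suc k" then have "Suc k < j" using m by simp
        moreover have "i \<le> Suc k" using m by simp
        ultimately show False using maxloop_loop[OF m(1)] False unfolding inC_def by blast
      qed
      then have "w ! k = S \<or> w ! k = W" using loop_last[OF maxloop_loop[OF m(1)]] by simp
      thus ?thesis using Ck k' by (auto simp: psi_nth)
    qed
  next
    case False note Ck = False
    show ?thesis
    proof (cases "inC w (Suc k)")
      case True
      obtain i j where m: "maxloop w i j" "i \<le> Suc k" "Suc k < j" using inC_maxloop[OF True] by blast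
      have "i = Suc k"
      proof (rule ccontr)
        assume "i \<noteq> Suc k" then have "i \<le> k" using m by simp
        moreover have "k < j" using m by simp
        ultimately show False using maxloop_loop[OF m(1)] Ck unfolding inC_def by blast
      qed
      then have "w ! Suc k = N" using st maxloop_loop[OF m(1)] by (auto simp: standard_iff)
      thus ?thesis using True k' by (auto simp: psi_nth)
    next
      case False
      thus ?thesis using Ck wk k' by (cases "w ! k"; cases "w ! Suc k") (auto simp: psi_nth)
    qed
  qed
qed

lemma psi_big: assumes "big_walk w"
  shows "big_walk (psi w)" "fst (pos (psi w) (length (psi w))) = - fst (pos w (length w))"
proof -
  have e: "fst (pos w (length w)) + snd (pos w (length w)) = 0" using assms by (simp add: big_walk_def)
  show "fst (pos (psi w) (length (psi w))) = - fst (pos w (length w))"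
    using psi_end[of w] e by simp
  show "big_walk (psi w)"
    unfolding big_walk_def using assms psi_standard psi_eager psi_sum[of _ w]
    by (auto simp: big_walk_def)
qed



lemma pos_append_ge: "length u \<le> k \<Longrightarrow>
  pos (u @ v) k = (px u (length u) + px v (k - length u), py u (length u) + py v (k - length u))"
  using pos_append_shift[of u v "k - length u"] by simp

lemma big_last: assumes b: "big_walk u" and ne: "u \<noteq> []"
  shows "u ! (length u - 1) = S \<or> u ! (length u - 1) = W"
proof -
  let ?k = "length u - 1"
  have k: "?k < length u" "Suc ?k = length u" using ne by auto
  have "px u ?k + py u ?k \<ge> 0" "px u (length u) + py u (length u) = 0"
    using b by (auto simp: big_walk_def)
  moreover have "pos u (length u) = (px u ?k + fst (step_vec (u!?k)), py u ?k + snd (step_vec (u!?k)))"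
    using pos_Suc[OF k(1)] k(2) by simp
  ultimately show ?thesis by (cases "u ! ?k") auto
qed

lemma big_first: assumes b: "big_walk v" and ne: "v \<noteq> []"
  shows "v ! 0 = N \<or> v ! 0 = E"
proof -
  have "1 \<le> length v" using ne by (cases v) auto
  then have "px v 1 + py v 1 \<ge> 0" using b unfolding big_walk_def by blast
  moreover have "pos v 1 = (fst (step_vec (v!0)), snd (step_vec (v!0)))"
    using pos_Suc[of 0 v] ne by simp
  ultimately show ?thesis by (cases "v ! 0") auto
qed

lemma big_append: assumes bu: "big_walk u" and bv: "big_walk v" shows "big_walk (u @ v)"
proof -
  let ?w = "u @ v" and ?n = "length u"
  have eu: "px u ?n + py u ?n = 0" and ev: "px v (length v) + py v (length v) = 0"
    using bu bv by (auto simp: big_walk_def)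
  have half: "px ?w k + py ?w k \<ge> 0" if "k \<le> length ?w" for k
  proof (cases "k \<le> ?n")
    case True thus ?thesis using bu by (simp add: pos_append_le big_walk_def)
  next
    case False
    have "px v (k - ?n) + py v (k - ?n) \<ge> 0" using bv that by (auto simp: big_walk_def)
    thus ?thesis using False eu by (simp add: pos_append_ge)
  qed
  have endp: "px ?w (length ?w) + py ?w (length ?w) = 0"
    using eu ev by (simp add: pos_append_ge)
  have eager: "eager ?w" unfolding eager_iff
  proof (intro allI impI)
    fix i assume i: "Suc i < length ?w"
    show "\<not> (?w ! i = E \<and> ?w ! Suc i = S) \<and> \<not> (?w ! i = N \<and> ?w ! Suc i = W)"
    proof (cases "Suc i < ?n")
      case True thus ?thesis using bu by (simp add: nth_append big_walk_def eager_iff)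
    next
      case False
      show ?thesis
      proof (cases "?n \<le> i")
        case True
        have "Suc (i - ?n) < length v" using i True by simp
        then have "\<not> (v ! (i - ?n) = E \<and> v ! Suc (i - ?n) = S) \<and> \<not> (v ! (i - ?n) = N \<and> v ! Suc (i - ?n) = W)"
          using bv by (simp add: big_walk_def eager_iff)
        moreover have "Suc i - ?n = Suc (i - ?n)" using True by simp
        ultimately show ?thesis using True by (simp add: nth_append)
      next
        case False2: False
        then have si: "Suc i = ?n" using False by simp
        then have "u \<noteq> []" "v \<noteq> []" using i by auto
        moreover have "i = length u - 1" using si by simp
        ultimately have "u ! i = S \<or> u ! i = W" "v ! 0 = N \<or> v ! 0 = E"
          using big_last[OF bu] big_first[OF bv] by auto
        thus ?thesis using si by (auto simp: nth_append)
      qed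
    qed
  qed
  have std: "standard ?w" unfolding standard_iff
  proof (intro allI impI)
    fix i j assume l: "loop ?w i j"
    have ij: "i < j" "j \<le> length ?w" "px ?w i = px ?w j" "py ?w i = py ?w j"
      "\<And>k. i \<le> k \<Longrightarrow> k \<le> j \<Longrightarrow> px ?w i \<le> px ?w k \<and> py ?w i \<le> py ?w k"
      using l by (auto simp: loop_iff)
    show "?w ! i = N"
    proof (cases "j \<le> ?n")
      case True
      have "loop u i j" unfolding loop_iff using ij True by (simp add: pos_append_le)
      then have "u ! i = N" using bu by (auto simp: big_walk_def standard_iff)
      thus ?thesis using ij True by (simp add: nth_append)
    next
      case False
      show ?thesis
      proof (cases "?n \<le> i")
        case True
        have "loop v (i - ?n) (j - ?n)" unfolding loop_iff
        proof (intro conjI allI impI)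
          show "i - ?n < j - ?n" "j - ?n \<le> length v" using ij True by auto
          show "px v (i - ?n) = px v (j - ?n)" "py v (i - ?n) = py v (j - ?n)"
            using ij True False by (auto simp: pos_append_ge)
        next
          fix k assume k: "i - ?n \<le> k \<and> k \<le> j - ?n"
          have "i \<le> k + ?n" "k + ?n \<le> j" using k True False by auto
          then have "px ?w i \<le> px ?w (k + ?n) \<and> py ?w i \<le> py ?w (k + ?n)" using ij(5)[of "k + ?n"] by blast
          thus "px v (i - ?n) \<le> px v k" "py v (i - ?n) \<le> py v k"
            using True by (auto simp: pos_append_ge)
        qed
        then have "v ! (i - ?n) = N" using bv by (auto simp: big_walk_def standard_iff)
        thus ?thesis using True by (simp add: nth_append)
      next
        case False2: False
        have J: "px ?w i \<le> px ?w ?n \<and> py ?w i \<le> py ?w ?n" using ij(5)[of ?n] False False2 by auto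
        have si: "px u i + py u i \<ge> 0" using bu False2 by (auto simp: big_walk_def)
        have eqJ: "px u i = px u ?n" "py u i = py u ?n"
          using J si eu False2 by (auto simp: pos_append_le)
        have "loop u i ?n" unfolding loop_iff
        proof (intro conjI allI impI)
          show "i < ?n" "?n \<le> length u" using False2 by auto
          show "px u i = px u ?n" "py u i = py u ?n" using eqJ by auto
        next
          fix k assume k: "i \<le> k \<and> k \<le> ?n"
          show "px u i \<le> px u k" "py u i \<le> py u k"
            using ij(5)[of k] k False False2 by (auto simp: pos_append_le)
        qed
        then have "u ! i = N" using bu by (auto simp: big_walk_def standard_iff)
        thus ?thesis using False2 by (simp add: nth_append)
      qed
    qed
  qed
  show ?thesis unfolding big_walk_def using half endp eager std by auto
qed

definition Bset :: "nat \<Rightarrow> step list set" where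
  "Bset n = {w. length w = 2 * n \<and> big_walk w}"

lemma finite_len: "finite {w :: step list. length w = k}"
  using finite_lists_length_eq[OF finite_step, of k] by simp

lemma card_len: "card {w :: step list. length w = k} = 4 ^ k"
  using card_lists_length_eq[OF finite_step, of k] card_step by simp

lemma finite_Bset: "finite (Bset n)"
  by (rule finite_subset[OF _ finite_len[of "2*n"]]) (auto simp: Bset_def)

lemma num_big_Bset: "num_big n = card (Bset n)" by (simp add: num_big_def Bset_def)

lemma supermult: "num_big m * num_big n \<le> num_big (m + n)"
proof -
  have "inj_on (\<lambda>(u,v). u @ v) (Bset m \<times> Bset n)"
    by (auto simp: inj_on_def Bset_def)
  moreover have "(\<lambda>(u,v). u @ v) ` (Bset m \<times> Bset n) \<subseteq> Bset (m + n)"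
    by (auto simp: Bset_def big_append)
  ultimately have "card (Bset m \<times> Bset n) \<le> card (Bset (m+n))"
    using card_inj_on_le finite_Bset by blast
  thus ?thesis by (simp add: num_big_Bset card_cartesian_product)
qed

lemma bound16: "num_big n \<le> 16 ^ n"
proof -
  have "card (Bset n) \<le> card {w :: step list. length w = 2 * n}"
    by (rule card_mono[OF finite_len]) (auto simp: Bset_def)
  also have "\<dots> = 16 ^ n" by (simp add: card_len power_mult)
  finally show ?thesis by (simp add: num_big_Bset)
qed

lemma NS_big: "big_walk [N, S]"
proof -
  have p: "pos [N,S] 0 = (0,0)" "pos [N,S] 1 = (0,1)" "pos [N,S] 2 = (0,0)"
    by (simp_all add: pos_def)
  have half: "\<forall>k \<le> length [N,S]. px [N,S] k + py [N,S] k \<ge> 0"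
  proof (intro allI impI)
    fix k assume "k \<le> length [N,S]"
    then have "k = 0 \<or> k = 1 \<or> k = 2" by auto
    thus "px [N,S] k + py [N,S] k \<ge> 0" using p by auto
  qed
  have std: "standard [N,S]" unfolding standard_iff
  proof (intro allI impI)
    fix i j assume l: "loop [N,S] i j"
    then have "i < j" "j \<le> 2" by (auto simp: loop_iff)
    then have "i = 0 \<or> (i = 1 \<and> j = 2)" by auto
    moreover have "\<not> (i = 1 \<and> j = 2)"
    proof
      assume h: "i = 1 \<and> j = 2"
      then have "pos [N,S] 1 = pos [N,S] 2" using l by (simp add: loop_def qp_subloop_def)
      with p show False by simp
    qed
    ultimately show "[N,S] ! i = N" by auto
  qed
  have "eager [N,S]" by (auto simp: eager_def)
  moreover have "pos [N,S] (length [N,S]) = (0,0)" by (simp add: pos_def)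
  ultimately show ?thesis using half std unfolding big_walk_def by simp
qed

lemma num_big_pos: "num_big n \<ge> 1"
proof (induction n)
  case 0
  have "Bset 0 = {[]}" by (auto simp: Bset_def big_walk_def standard_def eager_def qp_subloop_def pos_def)
  thus ?case by (simp add: num_big_Bset)
next
  case (Suc n)
  have "[N,S] \<in> Bset 1" using NS_big by (simp add: Bset_def)
  then have "num_big 1 \<ge> 1" using finite_Bset[of 1] by (simp add: num_big_Bset card_gt_0_iff Suc_le_eq) blast
  then have "1 * 1 \<le> num_big n * num_big 1" using Suc mult_le_mono by blast
  moreover have "num_big n * num_big 1 \<le> num_big (Suc n)" using supermult[of n 1] by simp
  ultimately show ?case by linarith
qed

lemma left_bound: "num_big n \<le> 2 * num_left n"
proof -
  let ?L = "{w. length w = 2 * n \<and> left_walk w}"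
  let ?R = "{w \<in> Bset n. fst (pos w (length w)) > 0}"
  have split: "Bset n = ?L \<union> ?R" by (auto simp: Bset_def left_walk_def)
  have disj: "?L \<inter> ?R = {}" by (auto simp: left_walk_def)
  have fL: "finite ?L" by (rule finite_subset[OF _ finite_Bset[of n]]) (auto simp: Bset_def left_walk_def)
  have fR: "finite ?R" using finite_Bset[of n] by simp
  have "inj_on psi ?R" by (metis inj_on_inverseI psi_psi)
  moreover have "psi ` ?R \<subseteq> ?L"
  proof
    fix x assume "x \<in> psi ` ?R"
    then obtain w where w: "w \<in> ?R" "x = psi w" by blast
    then show "x \<in> ?L" using psi_big[of w] by (auto simp: Bset_def left_walk_def)
  qed
  ultimately have "card ?R \<le> card ?L" using card_inj_on_le fL by blast
  moreover have "card (Bset n) = card ?L + card ?R" using split disj fL fR card_Un_disjoint by metis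
  ultimately show ?thesis by (simp add: num_big_Bset num_left_def)
qed

lemma left_le: "num_left n \<le> num_big n"
  unfolding num_left_def num_big_Bset
  by (rule card_mono[OF finite_Bset]) (auto simp: Bset_def left_walk_def)



lemma superadd_mult: assumes sa: "\<And>m n. a m + a n \<le> a (m + n)" and nn: "\<And>n. 0 \<le> a n"
  shows "real q * a m \<le> a (q * m)"
proof (induction q)
  case 0 thus ?case using nn by simp
next
  case (Suc q)
  have "a (q * m) + a m \<le> a (q * m + m)" by (rule sa)
  thus ?case using Suc by (simp add: algebra_simps)
qed

lemma fekete:
  fixes a :: "nat \<Rightarrow> real"
  assumes sa: "\<And>m n. a m + a n \<le> a (m + n)" and nn: "\<And>n. 0 \<le> a n" and ub: "\<And>n. a n \<le> c * real n"
  shows "\<exists>L. (\<lambda>n. a n / real n) \<longlonglongrightarrow> L"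
proof -
  define L where "L = (SUP n\<in>{1..}. a n / real n)"
  have bdd: "bdd_above ((\<lambda>n. a n / real n) ` {1..})"
  proof (rule bdd_aboveI)
    fix x assume "x \<in> (\<lambda>n. a n / real n) ` {1..}"
    then obtain n where n: "n \<ge> 1" "x = a n / real n" by auto
    thus "x \<le> c" using ub[of n] by (simp add: divide_le_eq)
  qed
  have le: "a n / real n \<le> L" if "n \<ge> 1" for n
    unfolding L_def using bdd that by (auto intro: cSUP_upper)
  have "(\<lambda>n. a n / real n) \<longlonglongrightarrow> L"
  proof (rule LIMSEQ_I)
    fix r :: real assume r: "0 < r"
    have "L - r/2 < L" using r by simp
    then obtain m where m: "m \<ge> 1" "L - r/2 < a m / real m"
    proof -
      have ne: "{1::nat..} \<noteq> {}" by auto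
      have "\<exists>x\<in>{1..}. L - r/2 < a x / real x"
        using less_cSUP_iff[OF ne bdd] \<open>L - r/2 < L\<close> unfolding L_def by blast
      thus ?thesis using that by auto
    qed
    have c0: "c \<ge> 0" using ub[of 1] nn[of 1] by simp
    obtain N :: nat where N: "N > 2 * real m * c / r" using reals_Archimedean2 by blast
    have "\<forall>n\<ge>Suc N. norm (a n / real n - L) < r"
    proof (intro allI impI)
      fix n assume n: "n \<ge> Suc N"
      then have n1: "n \<ge> 1" and npos: "real n > 0" by auto
      define q where "q = n div m"
      define rr where "rr = n mod m"
      have nq: "n = q * m + rr" by (simp add: q_def rr_def)
      have rr: "rr < m" using m by (simp add: rr_def)
      have "a (q*m) + a rr \<le> a n" using sa[of "q*m" rr] nq by simp
      then have "real q * a m \<le> a n" using superadd_mult[OF sa nn, of q m] nn[of rr] by linarith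
      moreover have "real q * real m \<ge> real n - real m" using nq rr
        by (metis of_nat_add of_nat_less_iff of_nat_mult add_le_cancel_left diff_le_eq less_imp_le add.commute)
      moreover have am: "a m / real m \<ge> 0" using nn[of m] by simp
      ultimately have "(real n - real m) * (a m / real m) \<le> a n"
      proof -
        assume h1: "real q * a m \<le> a n" and h2: "real q * real m \<ge> real n - real m"
        have "(real n - real m) * (a m / real m) \<le> (real q * real m) * (a m / real m)"
          using h2 am by (rule mult_right_mono)
        also have "\<dots> = real q * a m" using m by simp
        finally show ?thesis using h1 by simp
      qed
      then have "a n / real n \<ge> (real n - real m) * (a m / real m) / real n"
        using npos divide_right_mono[of _ _ "real n"] by (simp del: times_divide_eq_right times_divide_eq_left)
      also have "(real n - real m) * (a m / real m) / real n = a m / real m - real m * (a m / real m) / real n"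
        using npos by (simp add: field_simps)
      finally have lo: "a m / real m - real m * (a m / real m) / real n \<le> a n / real n" .
      have amc: "a m / real m \<le> c" using ub[of m] m by (simp add: divide_le_eq)
      have "real m * (a m / real m) / real n \<le> real m * c / real n"
      proof -
        have "real m * (a m / real m) = a m" using m by simp
        moreover have "a m \<le> real m * c" using ub[of m] by (simp add: mult.commute)
        ultimately show ?thesis using npos by (simp add: divide_right_mono)
      qed
      also have "real m * c / real n < r / 2"
      proof -
        have "real n > 2 * real m * c / r" using N n by linarith
        then have "real n * r > 2 * real m * c" using r by (simp add: divide_less_eq)
        thus ?thesis using npos r by (simp add: divide_less_eq field_simps)
      qed
      finally have "a n / real n > L - r" using lo m by linarith
      moreover have "a n / real n \<le> L" using le n1 by simp
      ultimately show "norm (a n / real n - L) < r" using r by simp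
    qed
    thus "\<exists>no. \<forall>n\<ge>no. norm (a n / real n - L) < r" by blast
  qed
  thus ?thesis by blast
qed

lemma big_limit: "\<exists>L::real. (\<lambda>n. root n (real (num_big n))) \<longlonglongrightarrow> L"
proof -
  let ?a = "\<lambda>n. ln (real (num_big n))"
  have pos: "real (num_big n) \<ge> 1" for n using num_big_pos[of n] by simp
  have sa: "?a m + ?a n \<le> ?a (m + n)" for m n
  proof -
    have "?a m + ?a n = ln (real (num_big m) * real (num_big n))"
      using pos[of m] pos[of n] by (simp add: ln_mult)
    also have "\<dots> \<le> ?a (m + n)"
      using pos[of m] pos[of n] supermult[of m n] num_big_pos[of "m+n"]
      by (subst ln_le_cancel_iff) (auto simp: of_nat_mult[symmetric] simp del: of_nat_mult)
    finally show ?thesis .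
  qed
  have nn: "0 \<le> ?a n" for n using pos[of n] by simp
  have ub: "?a n \<le> ln 16 * real n" for n
  proof -
    have "?a n \<le> ln ((16::real) ^ n)"
      using pos[of n] bound16[of n] by (subst ln_le_cancel_iff) (auto simp: of_nat_power[symmetric] simp del: of_nat_power)
    thus ?thesis by (simp add: ln_realpow mult.commute)
  qed
  obtain L where L: "(\<lambda>n. ?a n / real n) \<longlonglongrightarrow> L" using fekete[of ?a, OF sa nn ub] by blast
  have "(\<lambda>n. exp (?a n / real n)) \<longlonglongrightarrow> exp L" by (rule tendsto_exp[OF L])
  moreover have "eventually (\<lambda>n. exp (?a n / real n) = root n (real (num_big n))) sequentially"
  proof (rule eventually_sequentiallyI[of 1])
    fix n :: nat assume "n \<ge> 1"
    then show "exp (?a n / real n) = root n (real (num_big n))"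
      using pos[of n] by (simp add: root_powr_inverse powr_def)
  qed
  ultimately have "(\<lambda>n. root n (real (num_big n))) \<longlonglongrightarrow> exp L"
    using Lim_transform_eventually by fastforce
  thus ?thesis by blast
qed

lemma left_limit: assumes L: "(\<lambda>n. root n (real (num_big n))) \<longlonglongrightarrow> L"
  shows "(\<lambda>n. root n (real (num_left n))) \<longlonglongrightarrow> L"
proof (rule tendsto_sandwich)
  show "eventually (\<lambda>n. root n (real (num_big n)) / root n 2 \<le> root n (real (num_left n))) sequentially"
  proof (rule eventually_sequentiallyI[of 1])
    fix n :: nat assume n: "n \<ge> 1"
    have "real (num_big n) / 2 \<le> real (num_left n)" using left_bound[of n] by simp
    then have "root n (real (num_big n) / 2) \<le> root n (real (num_left n))"
      using n by (intro real_root_le_mono) auto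
    thus "root n (real (num_big n)) / root n 2 \<le> root n (real (num_left n))"
      by (simp add: real_root_divide)
  qed
  show "eventually (\<lambda>n. root n (real (num_left n)) \<le> root n (real (num_big n))) sequentially"
  proof (rule eventually_sequentiallyI[of 1])
    fix n :: nat assume n: "n \<ge> 1"
    show "root n (real (num_left n)) \<le> root n (real (num_big n))"
      using n left_le[of n] by (intro real_root_le_mono) auto
  qed
  have "(\<lambda>n. root n 2) \<longlonglongrightarrow> (1::real)" by (rule LIMSEQ_root_const) simp
  then show "(\<lambda>n. root n (real (num_big n)) / root n 2) \<longlonglongrightarrow> L"
    using tendsto_divide[OF L] by fastforce
  show "(\<lambda>n. root n (real (num_big n))) \<longlonglongrightarrow> L" by (rule L)
qed

theorem mainTheorem3:
  shows "(\<forall>m n. num_big (m + n) \<ge> num_big m * num_big n)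
    \<and> (\<forall>n. num_big n \<le> 16 ^ n)
    \<and> (\<exists>L::real. (\<lambda>n. root n (real (num_big n))) \<longlonglongrightarrow> L)
    \<and> (\<forall>n. 2 * num_left n \<ge> num_big n)
    \<and> (\<exists>L::real. (\<lambda>n. root n (real (num_big n))) \<longlonglongrightarrow> L
                 \<and> (\<lambda>n. root n (real (num_left n))) \<longlonglongrightarrow> L)"
  using supermult bound16 big_limit left_bound left_limit by blast

end
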